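(* Let $U$ and $W$ be two normalized graphons. Then $d_{\mathrm{LP}}(D_U,D_W)\le\sqrt{2\,\delta_\square(U,W)}$.
   Context: A graphon over $(\Omega,\mathcal F,\pi)$ is a measurable symmetric $W:\Omega\times\Omega\to[0,\infty)$ with $\int W<\infty$; it is normalized if $\int W\,d\pi\,d\pi=1$. Its degrees are the random variable $W_x=\int_\Omega W(x,y)\,d\pi(y)$ with $x\sim\pi$, with distribution function $D_W(\lambda)=\pi(\{x:W_x\le\lambda\})$. The Lévy–Prokhorov distance between distribution functions is $d_{\mathrm{LP}}(D,D')=\inf\{\varepsilon>0:D'(\lambda-\varepsilon)-\varepsilon\le D(\lambda)\le D'(\lambda+\varepsilon)+\varepsilon\ \text{for all }\lambda\in\mathbb R\}$. For graphons $W$ on $(\Omega,\pi)$ and $W'$ on $(\Omega',\pi')$, $\delta_\square(W,W')=\inf_\nu\sup_{S,T}|\int_{S\times T}(W(x,y)-W'(x',y'))\,d\nu(x,x')\,d\nu(y,y')|$, the infimum over couplings $\nu$ of $\pi,\pi'$ and supremum over measurable $S,T\subseteq\Omega\times\Omega'$. *)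

theory Defs
  imports "HOL-Probability.Probability"
begin

definition graphon :: "'a measure \<Rightarrow> ('a \<Rightarrow> 'a \<Rightarrow> real) \<Rightarrow> bool" where
  "graphon M W \<longleftrightarrow>
     (\<lambda>(x, y). W x y) \<in> borel_measurable (M \<Otimes>\<^sub>M M) \<and>
     (\<forall>x\<in>space M. \<forall>y\<in>space M. 0 \<le> W x y \<and> W x y = W y x) \<and>
     integrable (M \<Otimes>\<^sub>M M) (\<lambda>(x, y). W x y)"

definition normalized_graphon :: "'a measure \<Rightarrow> ('a \<Rightarrow> 'a \<Rightarrow> real) \<Rightarrow> bool" where
  "normalized_graphon M W \<longleftrightarrow> graphon M W \<and> (\<integral>(x, y). W x y \<partial>(M \<Otimes>\<^sub>M M)) = 1"

definition degree :: "'a measure \<Rightarrow> ('a \<Rightarrow> 'a \<Rightarrow> real) \<Rightarrow> 'a \<Rightarrow> real" where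
  "degree M W x = (\<integral>y. W x y \<partial>M)"

definition degree_dist :: "'a measure \<Rightarrow> ('a \<Rightarrow> 'a \<Rightarrow> real) \<Rightarrow> real \<Rightarrow> real" where
  "degree_dist M W l = measure M {x \<in> space M. degree M W x \<le> l}"

definition dLP :: "(real \<Rightarrow> real) \<Rightarrow> (real \<Rightarrow> real) \<Rightarrow> real" where
  "dLP D D' = Inf {e. e > 0 \<and> (\<forall>l. D' (l - e) - e \<le> D l \<and> D l \<le> D' (l + e) + e)}"

definition coupling :: "'a measure \<Rightarrow> 'b measure \<Rightarrow> ('a \<times> 'b) measure \<Rightarrow> bool" where
  "coupling M M' \<nu> \<longleftrightarrow> sets \<nu> = sets (M \<Otimes>\<^sub>M M') \<and> distr \<nu> M fst = M \<and> distr \<nu> M' snd = M'"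

definition cut_term :: "('a \<Rightarrow> 'a \<Rightarrow> real) \<Rightarrow> ('b \<Rightarrow> 'b \<Rightarrow> real) \<Rightarrow> ('a \<times> 'b) measure
    \<Rightarrow> ('a \<times> 'b) set \<Rightarrow> ('a \<times> 'b) set \<Rightarrow> real" where
  "cut_term U W \<nu> S T =
     (\<integral>z. indicator S (fst z) * indicator T (snd z) *
            (U (fst (fst z)) (fst (snd z)) - W (snd (fst z)) (snd (snd z))) \<partial>(\<nu> \<Otimes>\<^sub>M \<nu>))"

definition cut_distance :: "'a measure \<Rightarrow> ('a \<Rightarrow> 'a \<Rightarrow> real) \<Rightarrow> 'b measure \<Rightarrow> ('b \<Rightarrow> 'b \<Rightarrow> real) \<Rightarrow> real" where
  "cut_distance M U M' W =
     Inf {Sup {\<bar>cut_term U W \<nu> S T\<bar> | S T. S \<in> sets (M \<Otimes>\<^sub>M M') \<and> T \<in> sets (M \<Otimes>\<^sub>M M')}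
          | \<nu>. coupling M M' \<nu>}"

end

theory Submission
  imports Defs
begin


lemma cpl_basic:
  assumes M: "prob_space M" and M': "prob_space M'" and c: "coupling M M' \<nu>"
  shows "fst \<in> \<nu> \<rightarrow>\<^sub>M M" "snd \<in> \<nu> \<rightarrow>\<^sub>M M'" "space \<nu> = space M \<times> space M'"
    "prob_space \<nu>" "distr \<nu> M fst = M" "distr \<nu> M' snd = M'" "sets \<nu> = sets (M \<Otimes>\<^sub>M M')"
proof -
  have s: "sets \<nu> = sets (M \<Otimes>\<^sub>M M')" using c unfolding coupling_def by simp
  show f: "fst \<in> \<nu> \<rightarrow>\<^sub>M M" unfolding measurable_cong_sets[OF s refl] by simp
  show "snd \<in> \<nu> \<rightarrow>\<^sub>M M'" unfolding measurable_cong_sets[OF s refl] by simp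
  show sp: "space \<nu> = space M \<times> space M'" using sets_eq_imp_space_eq[OF s] by (simp add: space_pair_measure)
  show d: "distr \<nu> M fst = M" "distr \<nu> M' snd = M'" "sets \<nu> = sets (M \<Otimes>\<^sub>M M')" using c unfolding coupling_def by auto
  have "emeasure \<nu> (space \<nu>) = emeasure (distr \<nu> M fst) (space M)"
  proof -
    have "fst -` space M \<inter> space \<nu> = space \<nu>" using sp by auto
    then show ?thesis using emeasure_distr[OF f sets.top] by simp
  qed
  also have "\<dots> = 1" using d prob_space.emeasure_space_1[OF M] by simp
  finally show "prob_space \<nu>" by (rule prob_spaceI)
qed

lemma graphon_facts:
  assumes "graphon M U"
  shows "(\<lambda>(x, y). U x y) \<in> borel_measurable (M \<Otimes>\<^sub>M M)"
    "integrable (M \<Otimes>\<^sub>M M) (\<lambda>(x, y). U x y)"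
  using assms unfolding graphon_def by auto

lemma cpl_integrable:
  assumes M: "prob_space M" and M': "prob_space M'" and gU: "graphon M U" and gW: "graphon M' W"
    and c: "coupling M M' \<nu>"
  shows "integrable (\<nu> \<Otimes>\<^sub>M \<nu>) (\<lambda>z. U (fst (fst z)) (fst (snd z)))"
    "integrable (\<nu> \<Otimes>\<^sub>M \<nu>) (\<lambda>z. W (snd (fst z)) (snd (snd z)))"
proof -
  note cb = cpl_basic[OF M M' c]
  have sM: "sigma_finite_measure M" "sigma_finite_measure M'" using M M' by (simp_all add: prob_space_imp_sigma_finite)
  have eq1: "distr (\<nu> \<Otimes>\<^sub>M \<nu>) (M \<Otimes>\<^sub>M M) (\<lambda>(x,y). (fst x, fst y)) = M \<Otimes>\<^sub>M M"
    using pair_measure_distr[OF cb(1) cb(1)] sM unfolding cb(5) by simp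
  have eq2: "distr (\<nu> \<Otimes>\<^sub>M \<nu>) (M' \<Otimes>\<^sub>M M') (\<lambda>(x,y). (snd x, snd y)) = M' \<Otimes>\<^sub>M M'"
    using pair_measure_distr[OF cb(2) cb(2)] sM unfolding cb(6) by simp
  have m1: "(\<lambda>(x,y). (fst x, fst y)) \<in> (\<nu> \<Otimes>\<^sub>M \<nu>) \<rightarrow>\<^sub>M (M \<Otimes>\<^sub>M M)"
    using cb(1) by (auto intro!: measurable_Pair measurable_compose[OF measurable_fst] measurable_compose[OF measurable_snd] simp: split_beta')
  have m2: "(\<lambda>(x,y). (snd x, snd y)) \<in> (\<nu> \<Otimes>\<^sub>M \<nu>) \<rightarrow>\<^sub>M (M' \<Otimes>\<^sub>M M')"
    using cb(2) by (auto intro!: measurable_Pair measurable_compose[OF measurable_fst] measurable_compose[OF measurable_snd] simp: split_beta')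
  have "integrable (distr (\<nu> \<Otimes>\<^sub>M \<nu>) (M \<Otimes>\<^sub>M M) (\<lambda>(x,y). (fst x, fst y))) (\<lambda>(x, y). U x y)"
    using eq1 graphon_facts[OF gU] by simp
  then show "integrable (\<nu> \<Otimes>\<^sub>M \<nu>) (\<lambda>z. U (fst (fst z)) (fst (snd z)))"
    using integrable_distr_eq[OF m1 graphon_facts(1)[OF gU]] by (simp add: split_beta')
  have "integrable (distr (\<nu> \<Otimes>\<^sub>M \<nu>) (M' \<Otimes>\<^sub>M M') (\<lambda>(x,y). (snd x, snd y))) (\<lambda>(x, y). W x y)"
    using eq2 graphon_facts[OF gW] by simp
  then show "integrable (\<nu> \<Otimes>\<^sub>M \<nu>) (\<lambda>z. W (snd (fst z)) (snd (snd z)))"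
    using integrable_distr_eq[OF m2 graphon_facts(1)[OF gW]] by (simp add: split_beta')
qed

lemma cut_integrable_bound:
  assumes M: "prob_space M" and M': "prob_space M'" and gU: "graphon M U" and gW: "graphon M' W"
    and c: "coupling M M' \<nu>" and S: "S \<in> sets \<nu>" and T: "T \<in> sets \<nu>"
  shows "integrable (\<nu> \<Otimes>\<^sub>M \<nu>) (\<lambda>z. indicator S (fst z) * indicator T (snd z) *
            (U (fst (fst z)) (fst (snd z)) - W (snd (fst z)) (snd (snd z))))" (is "integrable _ ?F")
    "\<bar>cut_term U W \<nu> S T\<bar> \<le> (\<integral>z. \<bar>U (fst (fst z)) (fst (snd z))\<bar> + \<bar>W (snd (fst z)) (snd (snd z))\<bar> \<partial>(\<nu> \<Otimes>\<^sub>M \<nu>))"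
proof -
  note ii = cpl_integrable[OF M M' gU gW c]
  have [measurable]: "(\<lambda>z. U (fst (fst z)) (fst (snd z))) \<in> borel_measurable (\<nu> \<Otimes>\<^sub>M \<nu>)"
     "(\<lambda>z. W (snd (fst z)) (snd (snd z))) \<in> borel_measurable (\<nu> \<Otimes>\<^sub>M \<nu>)"
    using ii by (auto intro: borel_measurable_integrable)
  have [measurable]: "S \<in> sets \<nu>" "T \<in> sets \<nu>" using S T by auto
  have gi: "integrable (\<nu> \<Otimes>\<^sub>M \<nu>) (\<lambda>z. \<bar>U (fst (fst z)) (fst (snd z))\<bar> + \<bar>W (snd (fst z)) (snd (snd z))\<bar>)"
    using ii by auto
  have bd: "\<And>z. \<bar>?F z\<bar> \<le> \<bar>U (fst (fst z)) (fst (snd z))\<bar> + \<bar>W (snd (fst z)) (snd (snd z))\<bar>"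
    by (auto simp: indicator_def abs_mult)
  show fi: "integrable (\<nu> \<Otimes>\<^sub>M \<nu>) ?F"
    by (rule Bochner_Integration.integrable_bound[OF gi]) (measurable, use bd in auto)
  have "\<bar>cut_term U W \<nu> S T\<bar> \<le> (\<integral>z. \<bar>?F z\<bar> \<partial>(\<nu> \<Otimes>\<^sub>M \<nu>))"
    unfolding cut_term_def by (rule integral_abs_bound)
  also have "\<dots> \<le> (\<integral>z. \<bar>U (fst (fst z)) (fst (snd z))\<bar> + \<bar>W (snd (fst z)) (snd (snd z))\<bar> \<partial>(\<nu> \<Otimes>\<^sub>M \<nu>))"
    by (rule integral_mono[OF _ gi]) (use fi bd in auto)
  finally show "\<bar>cut_term U W \<nu> S T\<bar> \<le> (\<integral>z. \<bar>U (fst (fst z)) (fst (snd z))\<bar> + \<bar>W (snd (fst z)) (snd (snd z))\<bar> \<partial>(\<nu> \<Otimes>\<^sub>M \<nu>))" .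
qed

lemma degree_measurable:
  assumes "prob_space M" "graphon M U"
  shows "degree M U \<in> borel_measurable M"
proof -
  interpret M: prob_space M by fact
  show ?thesis unfolding degree_def[abs_def]
    by (rule M.borel_measurable_lebesgue_integral) (use graphon_facts[OF assms(2)] in simp)
qed

lemma inner_deg:
  assumes M: "prob_space M" and M': "prob_space M'" and gU: "graphon M U"
    and c: "coupling M M' \<nu>" and x: "x \<in> space M"
  shows "(\<integral>z. U x (fst z) \<partial>\<nu>) = degree M U x"
proof -
  note cb = cpl_basic[OF M M' c]
  have m: "(\<lambda>y. U x y) \<in> borel_measurable M"
    using measurable_Pair2[OF graphon_facts(1)[OF gU] x] by simp
  have "degree M U x = (\<integral>y. U x y \<partial>(distr \<nu> M fst))" by (subst cb(5)) (simp add: degree_def)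
  also have "\<dots> = (\<integral>z. U x (fst z) \<partial>\<nu>)" by (rule integral_distr[OF cb(1) m])
  finally show ?thesis by simp
qed

lemma inner_deg':
  assumes M: "prob_space M" and M': "prob_space M'" and gW: "graphon M' W"
    and c: "coupling M M' \<nu>" and x: "x \<in> space M'"
  shows "(\<integral>z. W x (snd z) \<partial>\<nu>) = degree M' W x"
proof -
  note cb = cpl_basic[OF M M' c]
  have m: "(\<lambda>y. W x y) \<in> borel_measurable M'"
    using measurable_Pair2[OF graphon_facts(1)[OF gW] x] by simp
  have "degree M' W x = (\<integral>y. W x y \<partial>(distr \<nu> M' snd))" by (subst cb(6)) (simp add: degree_def)
  also have "\<dots> = (\<integral>z. W x (snd z) \<partial>\<nu>)" by (rule integral_distr[OF cb(2) m])
  finally show ?thesis by simp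
qed

lemma cut_term_deg:
  assumes M: "prob_space M" and M': "prob_space M'" and gU: "graphon M U" and gW: "graphon M' W"
    and c: "coupling M M' \<nu>" and A: "A \<in> sets \<nu>"
  shows "cut_term U W \<nu> A (space \<nu>) = (\<integral>z. indicator A z * (degree M U (fst z) - degree M' W (snd z)) \<partial>\<nu>)"
proof -
  note cb = cpl_basic[OF M M' c]
  interpret \<nu>: prob_space \<nu> by (rule cb(4))
  interpret P: pair_sigma_finite \<nu> \<nu> unfolding pair_sigma_finite_def
    using cb(4) by (simp add: prob_space_imp_sigma_finite)
  note ii = cpl_integrable[OF M M' gU gW c]
  define F where "F = (\<lambda>z. indicator A (fst z) * indicator (space \<nu>) (snd z) *
            (U (fst (fst z)) (fst (snd z)) - W (snd (fst z)) (snd (snd z))))"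
  have fi: "integrable (\<nu> \<Otimes>\<^sub>M \<nu>) F" unfolding F_def
    by (rule cut_integrable_bound(1)[OF M M' gU gW c A sets.top])
  have "cut_term U W \<nu> A (space \<nu>) = integral\<^sup>L (\<nu> \<Otimes>\<^sub>M \<nu>) F" unfolding cut_term_def F_def ..
  also have "\<dots> = (\<integral>z1. (\<integral>z2. F (z1, z2) \<partial>\<nu>) \<partial>\<nu>)" by (rule P.integral_fst'[OF fi, symmetric])
  also have "\<dots> = (\<integral>z. indicator A z * (degree M U (fst z) - degree M' W (snd z)) \<partial>\<nu>)"
  proof (rule integral_cong_AE)
    have "(\<lambda>z. F z) \<in> borel_measurable (\<nu> \<Otimes>\<^sub>M \<nu>)" using fi by (rule borel_measurable_integrable)
    then show "(\<lambda>z1. \<integral>z2. F (z1, z2) \<partial>\<nu>) \<in> borel_measurable \<nu>"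
      by (intro \<nu>.borel_measurable_lebesgue_integral) simp
    have [measurable]: "degree M U \<in> borel_measurable M" "degree M' W \<in> borel_measurable M'"
      using degree_measurable M M' gU gW by auto
    have [measurable]: "fst \<in> \<nu> \<rightarrow>\<^sub>M M" "snd \<in> \<nu> \<rightarrow>\<^sub>M M'" "A \<in> sets \<nu>" using cb(1,2) A by auto
    show "(\<lambda>z. indicator A z * (degree M U (fst z) - degree M' W (snd z))) \<in> borel_measurable \<nu>"
      by measurable
    show "AE z1 in \<nu>. (\<integral>z2. F (z1, z2) \<partial>\<nu>) = indicator A z1 * (degree M U (fst z1) - degree M' W (snd z1))"
      using P.AE_integrable_fst'[OF ii(1)] P.AE_integrable_fst'[OF ii(2)] AE_space
    proof eventually_elim
      case (elim z1)
      then have iu: "integrable \<nu> (\<lambda>z2. U (fst z1) (fst z2))" and iw: "integrable \<nu> (\<lambda>z2. W (snd z1) (snd z2))"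
        and z1: "z1 \<in> space \<nu>" by auto
      have "(\<integral>z2. F (z1, z2) \<partial>\<nu>) = (\<integral>z2. indicator A z1 * (U (fst z1) (fst z2) - W (snd z1) (snd z2)) \<partial>\<nu>)"
        by (rule Bochner_Integration.integral_cong) (auto simp: F_def)
      also have "\<dots> = indicator A z1 * ((\<integral>z2. U (fst z1) (fst z2) \<partial>\<nu>) - (\<integral>z2. W (snd z1) (snd z2) \<partial>\<nu>))"
        using iu iw by simp
      also have "\<dots> = indicator A z1 * (degree M U (fst z1) - degree M' W (snd z1))"
        using inner_deg[OF M M' gU c] inner_deg'[OF M M' gW c] z1 cb(3) by auto
      finally show ?case .
    qed
  qed
  finally show ?thesis .
qed

lemma markov_ind:
  fixes g :: "'a \<Rightarrow> real"
  assumes P: "prob_space N" and gi: "integrable N g" and A: "A \<in> sets N" and ge: "\<And>z. z \<in> A \<Longrightarrow> e \<le> g z"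
  shows "e * measure N A \<le> (\<integral>z. indicator A z * g z \<partial>N)"
proof -
  interpret N: prob_space N by fact
  have As: "A \<inter> space N = A" using sets.sets_into_space[OF A] by auto
  have "e * measure N A = (\<integral>z. indicator A z * e \<partial>N)" using As by simp
  also have "\<dots> \<le> (\<integral>z. indicator A z * g z \<partial>N)"
  proof (rule integral_mono)
    have "integrable N (indicator A :: _ \<Rightarrow> real)" using A by (intro integrable_real_indicator) (auto simp: N.emeasure_finite less_top[symmetric])
    then show "integrable N (\<lambda>z. indicator A z * e)" by simp
    show "integrable N (\<lambda>z. indicator A z * g z)" using integrable_real_mult_indicator[OF A gi] by (simp add: mult.commute)
    show "\<And>z. z \<in> space N \<Longrightarrow> indicator A z * e \<le> indicator A z * g z" using ge by (auto simp: indicator_def)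
  qed
  finally show ?thesis .
qed

lemma deg_integrable:
  assumes M: "prob_space M" and M': "prob_space M'" and gU: "graphon M U" and gW: "graphon M' W"
    and c: "coupling M M' \<nu>"
  shows "integrable \<nu> (\<lambda>z. degree M U (fst z) - degree M' W (snd z))"
proof -
  note cb = cpl_basic[OF M M' c]
  interpret P: pair_sigma_finite M M unfolding pair_sigma_finite_def
    using M by (simp add: prob_space_imp_sigma_finite)
  interpret P': pair_sigma_finite M' M' unfolding pair_sigma_finite_def
    using M' by (simp add: prob_space_imp_sigma_finite)
  have "integrable M (\<lambda>x. \<integral>y. (\<lambda>(x, y). U x y) (x, y) \<partial>M)"
    by (rule P.integrable_fst') (rule graphon_facts(2)[OF gU])
  then have i1: "integrable M (degree M U)" by (simp add: degree_def[abs_def])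
  have "integrable M' (\<lambda>x. \<integral>y. (\<lambda>(x, y). W x y) (x, y) \<partial>M')"
    by (rule P'.integrable_fst') (rule graphon_facts(2)[OF gW])
  then have i2: "integrable M' (degree M' W)" by (simp add: degree_def[abs_def])
  have "integrable (distr \<nu> M fst) (degree M U)" by (subst cb(5)) (rule i1)
  then have j1: "integrable \<nu> (\<lambda>z. degree M U (fst z))"
    using integrable_distr_eq[OF cb(1) degree_measurable[OF M gU]] by blast
  have "integrable (distr \<nu> M' snd) (degree M' W)" by (subst cb(6)) (rule i2)
  then have j2: "integrable \<nu> (\<lambda>z. degree M' W (snd z))"
    using integrable_distr_eq[OF cb(2) degree_measurable[OF M' gW]] by blast
  show ?thesis using j1 j2 by simp
qed

lemma tail_bounds:
  assumes M: "prob_space M" and M': "prob_space M'" and gU: "graphon M U" and gW: "graphon M' W"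
    and c: "coupling M M' \<nu>"
  shows "e * measure \<nu> {z \<in> space \<nu>. e < degree M U (fst z) - degree M' W (snd z)}
           \<le> \<bar>cut_term U W \<nu> {z \<in> space \<nu>. e < degree M U (fst z) - degree M' W (snd z)} (space \<nu>)\<bar>"
    "e * measure \<nu> {z \<in> space \<nu>. e < degree M' W (snd z) - degree M U (fst z)}
           \<le> \<bar>cut_term U W \<nu> {z \<in> space \<nu>. e < degree M' W (snd z) - degree M U (fst z)} (space \<nu>)\<bar>"
proof -
  note cb = cpl_basic[OF M M' c]
  have [measurable]: "degree M U \<in> borel_measurable M" "degree M' W \<in> borel_measurable M'"
    using degree_measurable M M' gU gW by auto
  have [measurable]: "fst \<in> \<nu> \<rightarrow>\<^sub>M M" "snd \<in> \<nu> \<rightarrow>\<^sub>M M'" using cb(1,2) by auto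
  note gi = deg_integrable[OF M M' gU gW c]
  let ?A = "{z \<in> space \<nu>. e < degree M U (fst z) - degree M' W (snd z)}"
  let ?B = "{z \<in> space \<nu>. e < degree M' W (snd z) - degree M U (fst z)}"
  have A: "?A \<in> sets \<nu>" by measurable
  have B: "?B \<in> sets \<nu>" by measurable
  have "e * measure \<nu> ?A \<le> (\<integral>z. indicator ?A z * (degree M U (fst z) - degree M' W (snd z)) \<partial>\<nu>)"
    by (rule markov_ind[OF cb(4) gi A]) auto
  also have "\<dots> = cut_term U W \<nu> ?A (space \<nu>)" by (rule cut_term_deg[OF M M' gU gW c A, symmetric])
  finally show "e * measure \<nu> ?A \<le> \<bar>cut_term U W \<nu> ?A (space \<nu>)\<bar>" by simp
  have gi': "integrable \<nu> (\<lambda>z. degree M' W (snd z) - degree M U (fst z))"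
    using integrable_minus[OF gi] by (simp add: minus_diff_eq)
  have "e * measure \<nu> ?B \<le> (\<integral>z. indicator ?B z * (degree M' W (snd z) - degree M U (fst z)) \<partial>\<nu>)"
    by (rule markov_ind[OF cb(4) gi' B]) auto
  also have "\<dots> = (\<integral>z. - (indicator ?B z * (degree M U (fst z) - degree M' W (snd z))) \<partial>\<nu>)"
    by (rule Bochner_Integration.integral_cong) (auto simp: algebra_simps)
  also have "\<dots> = - (\<integral>z. indicator ?B z * (degree M U (fst z) - degree M' W (snd z)) \<partial>\<nu>)"
    by (rule integral_minus)
  also have "\<dots> = - cut_term U W \<nu> ?B (space \<nu>)" by (simp add: cut_term_deg[OF M M' gU gW c B])
  finally show "e * measure \<nu> ?B \<le> \<bar>cut_term U W \<nu> ?B (space \<nu>)\<bar>" by simp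
qed



lemma prod_coupling:
  assumes M: "prob_space M" and M': "prob_space M'"
  shows "coupling M M' (M \<Otimes>\<^sub>M M')"
proof -
  interpret M: prob_space M by fact
  interpret M': prob_space M' by fact
  have "distr (M \<Otimes>\<^sub>M M') M' snd = M'"
  proof (intro measure_eqI)
    fix A assume A: "A \<in> sets (distr (M \<Otimes>\<^sub>M M') M' snd)"
    then have A': "A \<in> sets M'" by simp
    have "snd -` A \<inter> space (M \<Otimes>\<^sub>M M') = space M \<times> A"
      using sets.sets_into_space[OF A'] by (auto simp: space_pair_measure)
    then have "emeasure (distr (M \<Otimes>\<^sub>M M') M' snd) A = emeasure (M \<Otimes>\<^sub>M M') (space M \<times> A)"
      using A' by (simp add: emeasure_distr)
    with A' show "emeasure (distr (M \<Otimes>\<^sub>M M') M' snd) A = emeasure M' A"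
      by (simp add: M'.emeasure_pair_measure_Times M.emeasure_space_1)
  qed simp
  then show ?thesis unfolding coupling_def using M'.distr_pair_fst by simp
qed

lemma dist_eq:
  assumes M: "prob_space M" and M': "prob_space M'" and gU: "graphon M U" and gW: "graphon M' W" and c: "coupling M M' \<nu>"
  shows "degree_dist M U l = measure \<nu> {z \<in> space \<nu>. degree M U (fst z) \<le> l}"
    "degree_dist M' W l = measure \<nu> {z \<in> space \<nu>. degree M' W (snd z) \<le> l}"
proof -
  note cb = cpl_basic[OF M M' c]
  have sp: "\<And>z. z \<in> space \<nu> \<Longrightarrow> fst z \<in> space M \<and> snd z \<in> space M'" using cb(3) by (simp add: mem_Times_iff)
  have e1: "fst -` {x \<in> space M. degree M U x \<le> l} \<inter> space \<nu> = {z \<in> space \<nu>. degree M U (fst z) \<le> l}"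
    using sp by blast
  have e2: "snd -` {x \<in> space M'. degree M' W x \<le> l} \<inter> space \<nu> = {z \<in> space \<nu>. degree M' W (snd z) \<le> l}"
    using sp by blast
  have "degree_dist M U l = measure (distr \<nu> M fst) {x \<in> space M. degree M U x \<le> l}"
    unfolding degree_dist_def by (subst cb(5)) (rule refl)
  also have "\<dots> = measure \<nu> (fst -` {x \<in> space M. degree M U x \<le> l} \<inter> space \<nu>)"
    by (rule measure_distr[OF cb(1)]) (use degree_measurable[OF M gU] in measurable)
  finally show "degree_dist M U l = measure \<nu> {z \<in> space \<nu>. degree M U (fst z) \<le> l}" using e1 by simp
  have "degree_dist M' W l = measure (distr \<nu> M' snd) {x \<in> space M'. degree M' W x \<le> l}"
    unfolding degree_dist_def by (subst cb(6)) (rule refl)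
  also have "\<dots> = measure \<nu> (snd -` {x \<in> space M'. degree M' W x \<le> l} \<inter> space \<nu>)"
    by (rule measure_distr[OF cb(2)]) (use degree_measurable[OF M' gW] in measurable)
  finally show "degree_dist M' W l = measure \<nu> {z \<in> space \<nu>. degree M' W (snd z) \<le> l}" using e2 by simp
qed


theorem theorem2p16:
  fixes M :: "'a measure" and M' :: "'b measure"
    and U :: "'a \<Rightarrow> 'a \<Rightarrow> real" and W :: "'b \<Rightarrow> 'b \<Rightarrow> real"
  assumes "prob_space M" and "prob_space M'"
    and "normalized_graphon M U" and "normalized_graphon M' W"
  shows "dLP (degree_dist M U) (degree_dist M' W) \<le> sqrt (2 * cut_distance M U M' W)"
proof -
  have gU: "graphon M U" and gW: "graphon M' W" using assms(3,4) by (auto simp: normalized_graphon_def)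
  define Cs where "Cs \<nu> = {\<bar>cut_term U W \<nu> S T\<bar> | S T. S \<in> sets (M \<Otimes>\<^sub>M M') \<and> T \<in> sets (M \<Otimes>\<^sub>M M')}" for \<nu>
  define C where "C \<nu> = Sup (Cs \<nu>)" for \<nu>
  have Cbd: "\<bar>cut_term U W \<nu> S T\<bar> \<le> C \<nu>" if c: "coupling M M' \<nu>" and S: "S \<in> sets \<nu>" and T: "T \<in> sets \<nu>" for \<nu> S T
  proof -
    have s: "sets \<nu> = sets (M \<Otimes>\<^sub>M M')" using c by (simp add: coupling_def)
    have "bdd_above (Cs \<nu>)"
    proof (rule bdd_aboveI)
      fix x assume "x \<in> Cs \<nu>"
      then obtain S' T' where x: "x = \<bar>cut_term U W \<nu> S' T'\<bar>" and "S' \<in> sets \<nu>" "T' \<in> sets \<nu>"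
        unfolding Cs_def using s by auto
      then show "x \<le> (\<integral>z. \<bar>U (fst (fst z)) (fst (snd z))\<bar> + \<bar>W (snd (fst z)) (snd (snd z))\<bar> \<partial>(\<nu> \<Otimes>\<^sub>M \<nu>))"
        using cut_integrable_bound(2)[OF assms(1,2) gU gW c] by simp
    qed
    moreover have "\<bar>cut_term U W \<nu> S T\<bar> \<in> Cs \<nu>" using S T s unfolding Cs_def by auto
    ultimately show ?thesis unfolding C_def by (intro cSup_upper)
  qed
  have C0: "0 \<le> C \<nu>" if "coupling M M' \<nu>" for \<nu>
    using Cbd[OF that sets.empty_sets sets.empty_sets] by linarith
  define K where "K = {C \<nu> | \<nu>. coupling M M' \<nu>}"
  have cd: "cut_distance M U M' W = Inf K" unfolding cut_distance_def K_def C_def Cs_def ..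
  have Kne: "K \<noteq> {}" using prod_coupling[OF assms(1,2)] unfolding K_def by auto
  have cd0: "0 \<le> cut_distance M U M' W" unfolding cd by (rule cInf_greatest[OF Kne]) (auto simp: K_def C0)
  define s where "s = sqrt (2 * cut_distance M U M' W)"
  have s0: "0 \<le> s" using cd0 by (simp add: s_def)
  define E where "E = {e. e > 0 \<and> (\<forall>l. degree_dist M' W (l - e) - e \<le> degree_dist M U l \<and> degree_dist M U l \<le> degree_dist M' W (l + e) + e)}"
  have key: "e \<in> E" if es: "s < e" for e
  proof -
    have e0: "0 < e" using s0 es by linarith
    have "s^2 < e^2" using s0 es by (simp add: power_strict_mono)
    then have "2 * cut_distance M U M' W < e^2" using cd0 by (simp add: s_def)
    then have "Inf K < e^2/2" using cd by simp
    from cInf_lessD[OF Kne this] obtain \<nu> where c: "coupling M M' \<nu>" and Cl: "C \<nu> < e^2/2"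
      unfolding K_def by blast
    note cb = cpl_basic[OF assms(1,2) c]
    interpret \<nu>: prob_space \<nu> by (rule cb(4))
    have [measurable]: "degree M U \<in> borel_measurable M" "degree M' W \<in> borel_measurable M'"
      using degree_measurable assms(1,2) gU gW by auto
    have [measurable]: "fst \<in> \<nu> \<rightarrow>\<^sub>M M" "snd \<in> \<nu> \<rightarrow>\<^sub>M M'" using cb(1,2) by auto
    define A where "A = {z \<in> space \<nu>. e < degree M U (fst z) - degree M' W (snd z)}"
    define B where "B = {z \<in> space \<nu>. e < degree M' W (snd z) - degree M U (fst z)}"
    have Am: "A \<in> sets \<nu>" "B \<in> sets \<nu>" unfolding A_def B_def by measurable
    have "e * measure \<nu> A \<le> C \<nu>"
      using tail_bounds(1)[OF assms(1,2) gU gW c, of e] Cbd[OF c Am(1) sets.top] unfolding A_def by linarith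
    then have "e * measure \<nu> A < e * (e/2)" using Cl by (simp add: power2_eq_square)
    then have mA: "measure \<nu> A \<le> e" using e0 by (simp add: mult_less_cancel_left_pos)
    have "e * measure \<nu> B \<le> C \<nu>"
      using tail_bounds(2)[OF assms(1,2) gU gW c, of e] Cbd[OF c Am(2) sets.top] unfolding B_def by linarith
    then have "e * measure \<nu> B < e * (e/2)" using Cl by (simp add: power2_eq_square)
    then have mB: "measure \<nu> B \<le> e" using e0 by (simp add: mult_less_cancel_left_pos)
    have "\<forall>l. degree_dist M' W (l - e) - e \<le> degree_dist M U l \<and> degree_dist M U l \<le> degree_dist M' W (l + e) + e"
    proof
      fix l
      have XU: "{z \<in> space \<nu>. degree M U (fst z) \<le> l} \<in> sets \<nu>" by measurable
      have XW: "{z \<in> space \<nu>. degree M' W (snd z) \<le> l + e} \<in> sets \<nu>" by measurable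
      have "measure \<nu> {z \<in> space \<nu>. degree M' W (snd z) \<le> l - e} \<le> measure \<nu> ({z \<in> space \<nu>. degree M U (fst z) \<le> l} \<union> A)"
        by (rule \<nu>.finite_measure_mono) (use XU Am in \<open>auto simp: A_def\<close>)
      also have "\<dots> \<le> measure \<nu> {z \<in> space \<nu>. degree M U (fst z) \<le> l} + measure \<nu> A"
        by (rule measure_subadditive[OF XU Am(1)]) (simp_all add: \<nu>.emeasure_finite)
      finally have 1: "degree_dist M' W (l - e) - e \<le> degree_dist M U l"
        using dist_eq(1)[OF assms(1,2) gU gW c, of l] dist_eq(2)[OF assms(1,2) gU gW c, of "l - e"] mA by linarith
      have "measure \<nu> {z \<in> space \<nu>. degree M U (fst z) \<le> l} \<le> measure \<nu> ({z \<in> space \<nu>. degree M' W (snd z) \<le> l + e} \<union> B)"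
        by (rule \<nu>.finite_measure_mono) (use XW Am in \<open>auto simp: B_def\<close>)
      also have "\<dots> \<le> measure \<nu> {z \<in> space \<nu>. degree M' W (snd z) \<le> l + e} + measure \<nu> B"
        by (rule measure_subadditive[OF XW Am(2)]) (simp_all add: \<nu>.emeasure_finite)
      finally have 2: "degree_dist M U l \<le> degree_dist M' W (l + e) + e"
        using dist_eq(1)[OF assms(1,2) gU gW c, of l] dist_eq(2)[OF assms(1,2) gU gW c, of "l + e"] mB by linarith
      show "degree_dist M' W (l - e) - e \<le> degree_dist M U l \<and> degree_dist M U l \<le> degree_dist M' W (l + e) + e"
        using 1 2 by simp
    qed
    then show ?thesis unfolding E_def using e0 by simp
  qed
  have bdd: "bdd_below E" by (rule bdd_belowI[where m=0]) (auto simp: E_def)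
  have "dLP (degree_dist M U) (degree_dist M' W) = Inf E" unfolding dLP_def E_def ..
  also have "Inf E \<le> s"
  proof (rule field_le_epsilon)
    fix d :: real assume "0 < d"
    then have "s + d \<in> E" by (intro key) simp
    then show "Inf E \<le> s + d" by (rule cInf_lower[OF _ bdd])
  qed
  finally show ?thesis unfolding s_def .
qed

end
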